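(* Let $C$ be a parity complex in which every cell $(M',P')$ has $M'$ and $P'$ receptive. Let $m,n\in\mathbb N$, let $(M,P)$ be an $n$-cell, and let $X\subseteq C_{n+1}$ be a well-formed set with exactly $m$ elements such that $X^\pm\subseteq M_n$. Put $Y=(M_n\cup X^-)\setminus X^+$. Then: (B) $(M^{n-1}\cup Y,\ P^{n-1}\cup Y)$ is a cell and $X^-\cap M_n=\emptyset$; (C) $(M^{n-1}\cup Y\cup X,\ P\cup X)$ is a cell.
   Context: A parity complex consists of a set $C=\bigsqcup_{n\ge 0}C_n$ graded by dimension, together with, for each $n\ge 0$ and each $x\in C_{n+1}$, two disjoint, non-empty, finite subsets $x^-,x^+\subseteq C_n$ (for $x\in C_0$ put $x^-=x^+=\emptyset$), subject to Axioms 1, 2, 3A, 3B below. Notation: for $S\subseteq C$, $S^-=\bigcup_{w\in S}w^-$, $S^+=\bigcup_{w\in S}w^+$, $S^\mp=S^-\setminus S^+$, $S^\pm=S^+\setminus S^-$; $x^{-+}=(x^-)^+$, etc.; $S_n=S\cap C_n$ and $S^n=\bigcup_{k=0}^n S_k$ (the $n$-skeleton; $S^{-1}=\emptyset$); $S$ is $n$-dimensional when $S=S^n$. For $S,T\subseteq C$ write $S\perp T$ when $S^-\cap T^-=\emptyset$ and $S^+\cap T^+=\emptyset$; $x\perp y$ means $\{x\}\perp\{y\}$. A set $S$ is well-formed when $S_0$ has at most one element and for every $n>0$ and all distinct $x,y\in S_n$, $x\perp y$. Write $x<y$ when $x^+\cap y^-\neq\emptyset$, and let $\lhd$ be the reflexive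 transitive closure of $<$. Axioms: (1) for all $x$, $x^{++}\cup x^{--}=x^{-+}\cup x^{+-}$; (2) for all $x$, $x^-$ and $x^+$ are well-formed; (3A) $x\lhd y$ and $y\lhd x$ imply $x=y$; (3B) if $x\lhd y$ then there is no $z$ with $x\in z^+$ and $y\in z^-$, and no $z$ with $y\in z^+$ and $x\in z^-$. For $S,M,P\subseteq C$, $S$ moves $M$ to $P$ when $M=(P\cup S^-)\setminus S^+$ and $P=(M\cup S^+)\setminus S^-$. A cell is a pair $(M,P)$ of non-empty, well-formed, finite subsets of $C$ such that $M$ moves $M$ to $P$ and $P$ moves $M$ to $P$; it is an $n$-cell when $M\cup P$ is $n$-dimensional. A set $S\subseteq C$ is receptive when for all $x\in C$: if $x^{-+}\cap x^{++}\subseteq S$ and $S\cap x^{--}=\emptyset$ then $S\cap x^{+-}=\emptyset$; and if $x^{+-}\cap x^{--}\subseteq S$ and $S\cap x^{++}=\emptyset$ then $S\cap x^{-+}=\emptyset$. *)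

theory Defs
  imports Main
begin

text \<open>A graded set C with dimension function dim and face maps mi (x^-) and pl (x^+).\<close>

definition sminus :: "('a \<Rightarrow> 'a set) \<Rightarrow> 'a set \<Rightarrow> 'a set" where
  "sminus mi S = (\<Union>w\<in>S. mi w)"

definition splus :: "('a \<Rightarrow> 'a set) \<Rightarrow> 'a set \<Rightarrow> 'a set" where
  "splus pl S = (\<Union>w\<in>S. pl w)"

definition smp :: "('a \<Rightarrow> 'a set) \<Rightarrow> ('a \<Rightarrow> 'a set) \<Rightarrow> 'a set \<Rightarrow> 'a set" where
  "smp mi pl S = sminus mi S - splus pl S"

definition spm :: "('a \<Rightarrow> 'a set) \<Rightarrow> ('a \<Rightarrow> 'a set) \<Rightarrow> 'a set \<Rightarrow> 'a set" where
  "spm mi pl S = splus pl S - sminus mi S"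

definition grade :: "('a \<Rightarrow> nat) \<Rightarrow> 'a set \<Rightarrow> nat \<Rightarrow> 'a set" where
  "grade dim S n = {x\<in>S. dim x = n}"

text \<open>S^k, the k-skeleton, for an integer k (so that S^{-1} is empty)\<close>
definition skel :: "('a \<Rightarrow> nat) \<Rightarrow> 'a set \<Rightarrow> int \<Rightarrow> 'a set" where
  "skel dim S k = {x\<in>S. int (dim x) \<le> k}"

definition orth :: "('a \<Rightarrow> 'a set) \<Rightarrow> ('a \<Rightarrow> 'a set) \<Rightarrow> 'a set \<Rightarrow> 'a set \<Rightarrow> bool" where
  "orth mi pl S T \<longleftrightarrow> sminus mi S \<inter> sminus mi T = {} \<and> splus pl S \<inter> splus pl T = {}"

definition well_formed :: "('a \<Rightarrow> nat) \<Rightarrow> ('a \<Rightarrow> 'a set) \<Rightarrow> ('a \<Rightarrow> 'a set) \<Rightarrow> 'a set \<Rightarrow> bool" where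
  "well_formed dim mi pl S \<longleftrightarrow>
     (\<forall>x\<in>S. \<forall>y\<in>S. dim x = 0 \<and> dim y = 0 \<longrightarrow> x = y) \<and>
     (\<forall>n>0. \<forall>x\<in>grade dim S n. \<forall>y\<in>grade dim S n. x \<noteq> y \<longrightarrow> orth mi pl {x} {y})"

definition prec :: "'a set \<Rightarrow> ('a \<Rightarrow> 'a set) \<Rightarrow> ('a \<Rightarrow> 'a set) \<Rightarrow> 'a \<Rightarrow> 'a \<Rightarrow> bool" where
  "prec C mi pl x y \<longleftrightarrow> x \<in> C \<and> y \<in> C \<and> pl x \<inter> mi y \<noteq> {}"

definition preceq :: "'a set \<Rightarrow> ('a \<Rightarrow> 'a set) \<Rightarrow> ('a \<Rightarrow> 'a set) \<Rightarrow> 'a \<Rightarrow> 'a \<Rightarrow> bool" where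
  "preceq C mi pl = (prec C mi pl)\<^sup>*\<^sup>*"

definition parity_complex ::
  "'a set \<Rightarrow> ('a \<Rightarrow> nat) \<Rightarrow> ('a \<Rightarrow> 'a set) \<Rightarrow> ('a \<Rightarrow> 'a set) \<Rightarrow> bool" where
  "parity_complex C dim mi pl \<longleftrightarrow>
     (\<forall>x\<in>C. dim x = 0 \<longrightarrow> mi x = {} \<and> pl x = {}) \<and>
     (\<forall>x\<in>C. dim x > 0 \<longrightarrow>
        mi x \<subseteq> C \<and> pl x \<subseteq> C \<and>
        (\<forall>y\<in>mi x \<union> pl x. Suc (dim y) = dim x) \<and>
        mi x \<inter> pl x = {} \<and> mi x \<noteq> {} \<and> pl x \<noteq> {} \<and> finite (mi x) \<and> finite (pl x)) \<and>
     \<comment> \<open>Axiom 1\<close>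
     (\<forall>x\<in>C. splus pl (pl x) \<union> sminus mi (mi x) = splus pl (mi x) \<union> sminus mi (pl x)) \<and>
     \<comment> \<open>Axiom 2\<close>
     (\<forall>x\<in>C. well_formed dim mi pl (mi x) \<and> well_formed dim mi pl (pl x)) \<and>
     \<comment> \<open>Axiom 3A\<close>
     (\<forall>x\<in>C. \<forall>y\<in>C. preceq C mi pl x y \<and> preceq C mi pl y x \<longrightarrow> x = y) \<and>
     \<comment> \<open>Axiom 3B\<close>
     (\<forall>x\<in>C. \<forall>y\<in>C. preceq C mi pl x y \<longrightarrow>
        \<not> (\<exists>z\<in>C. x \<in> pl z \<and> y \<in> mi z) \<and> \<not> (\<exists>z\<in>C. y \<in> pl z \<and> x \<in> mi z))"

definition moves :: "('a \<Rightarrow> 'a set) \<Rightarrow> ('a \<Rightarrow> 'a set) \<Rightarrow> 'a set \<Rightarrow> 'a set \<Rightarrow> 'a set \<Rightarrow> bool" where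
  "moves mi pl S M P \<longleftrightarrow> M = (P \<union> sminus mi S) - splus pl S \<and> P = (M \<union> splus pl S) - sminus mi S"

definition cell ::
  "'a set \<Rightarrow> ('a \<Rightarrow> nat) \<Rightarrow> ('a \<Rightarrow> 'a set) \<Rightarrow> ('a \<Rightarrow> 'a set) \<Rightarrow> 'a set \<Rightarrow> 'a set \<Rightarrow> bool" where
  "cell C dim mi pl M P \<longleftrightarrow>
     M \<subseteq> C \<and> P \<subseteq> C \<and> M \<noteq> {} \<and> P \<noteq> {} \<and> finite M \<and> finite P \<and>
     well_formed dim mi pl M \<and> well_formed dim mi pl P \<and>
     moves mi pl M M P \<and> moves mi pl P M P"

definition n_cell ::
  "'a set \<Rightarrow> ('a \<Rightarrow> nat) \<Rightarrow> ('a \<Rightarrow> 'a set) \<Rightarrow> ('a \<Rightarrow> 'a set) \<Rightarrow> nat \<Rightarrow> 'a set \<Rightarrow> 'a set \<Rightarrow> bool" where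
  "n_cell C dim mi pl n M P \<longleftrightarrow> cell C dim mi pl M P \<and> skel dim (M \<union> P) (int n) = M \<union> P"

definition receptive :: "'a set \<Rightarrow> ('a \<Rightarrow> 'a set) \<Rightarrow> ('a \<Rightarrow> 'a set) \<Rightarrow> 'a set \<Rightarrow> bool" where
  "receptive C mi pl S \<longleftrightarrow>
     (\<forall>x\<in>C.
       (splus pl (mi x) \<inter> splus pl (pl x) \<subseteq> S \<and> S \<inter> sminus mi (mi x) = {}
          \<longrightarrow> S \<inter> sminus mi (pl x) = {}) \<and>
       (sminus mi (pl x) \<inter> sminus mi (mi x) \<subseteq> S \<and> S \<inter> splus pl (pl x) = {}
          \<longrightarrow> S \<inter> splus pl (mi x) = {}))"

end

theory Submission
  imports Defs
begin

locale PC =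
  fixes C :: "'a set" and dim :: "'a \<Rightarrow> nat" and mi pl :: "'a \<Rightarrow> 'a set"
  assumes pc: "parity_complex C dim mi pl"
    and rec: "\<And>M' P'. cell C dim mi pl M' P' \<Longrightarrow> receptive C mi pl M' \<and> receptive C mi pl P'"
begin

lemma Sm_iff[simp]: "z \<in> sminus mi S \<longleftrightarrow> (\<exists>w\<in>S. z \<in> mi w)" by (auto simp: sminus_def)
lemma Sp_iff[simp]: "z \<in> splus pl S \<longleftrightarrow> (\<exists>w\<in>S. z \<in> pl w)" by (auto simp: splus_def)
lemma grade_iff[simp]: "z \<in> grade dim S j \<longleftrightarrow> z \<in> S \<and> dim z = j" by (auto simp: grade_def)
lemma skel_iff[simp]: "z \<in> skel dim S k \<longleftrightarrow> z \<in> S \<and> int (dim z) \<le> k" by (auto simp: skel_def)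

lemma mi_C: "x \<in> C \<Longrightarrow> mi x \<subseteq> C" using pc unfolding parity_complex_def by (cases "dim x = 0") auto
lemma pl_C: "x \<in> C \<Longrightarrow> pl x \<subseteq> C" using pc unfolding parity_complex_def by (cases "dim x = 0") auto
lemma dim_mi: "x \<in> C \<Longrightarrow> y \<in> mi x \<Longrightarrow> dim x = Suc (dim y)"
  using pc unfolding parity_complex_def by (cases "dim x = 0") auto
lemma dim_pl: "x \<in> C \<Longrightarrow> y \<in> pl x \<Longrightarrow> dim x = Suc (dim y)"
  using pc unfolding parity_complex_def by (cases "dim x = 0") auto
lemma mp_disj: "x \<in> C \<Longrightarrow> mi x \<inter> pl x = {}"
  using pc unfolding parity_complex_def by (cases "dim x = 0") auto
lemma mi_ne: "x \<in> C \<Longrightarrow> 0 < dim x \<Longrightarrow> mi x \<noteq> {}"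
  using pc unfolding parity_complex_def by auto
lemma pl_ne: "x \<in> C \<Longrightarrow> 0 < dim x \<Longrightarrow> pl x \<noteq> {}"
  using pc unfolding parity_complex_def by auto
lemma fin_mi: "x \<in> C \<Longrightarrow> finite (mi x)"
  using pc unfolding parity_complex_def by (cases "dim x = 0") auto
lemma fin_pl: "x \<in> C \<Longrightarrow> finite (pl x)"
  using pc unfolding parity_complex_def by (cases "dim x = 0") auto
lemma ax1: "x \<in> C \<Longrightarrow> splus pl (pl x) \<union> sminus mi (mi x) = splus pl (mi x) \<union> sminus mi (pl x)"
  using pc unfolding parity_complex_def by blast
lemma wf_mi: "x \<in> C \<Longrightarrow> well_formed dim mi pl (mi x)"
  using pc unfolding parity_complex_def by blast
lemma wf_pl: "x \<in> C \<Longrightarrow> well_formed dim mi pl (pl x)"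
  using pc unfolding parity_complex_def by blast
lemma ax3A: "x \<in> C \<Longrightarrow> y \<in> C \<Longrightarrow> preceq C mi pl x y \<Longrightarrow> preceq C mi pl y x \<Longrightarrow> x = y"
  using pc unfolding parity_complex_def by blast
lemma ax3B1: "preceq C mi pl x y \<Longrightarrow> x \<in> C \<Longrightarrow> y \<in> C \<Longrightarrow> z \<in> C \<Longrightarrow> x \<in> pl z \<Longrightarrow> y \<in> mi z \<Longrightarrow> False"
  using pc unfolding parity_complex_def by blast
lemma ax3B2: "preceq C mi pl x y \<Longrightarrow> x \<in> C \<Longrightarrow> y \<in> C \<Longrightarrow> z \<in> C \<Longrightarrow> y \<in> pl z \<Longrightarrow> x \<in> mi z \<Longrightarrow> False"
  using pc unfolding parity_complex_def by blast

lemma prec_iff: "prec C mi pl a b \<longleftrightarrow> a \<in> C \<and> b \<in> C \<and> (\<exists>y. y \<in> pl a \<and> y \<in> mi b)"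
  by (auto simp: prec_def)
lemma prec_I: "a \<in> C \<Longrightarrow> b \<in> C \<Longrightarrow> y \<in> pl a \<Longrightarrow> y \<in> mi b \<Longrightarrow> preceq C mi pl a b"
  unfolding preceq_def by (rule r_into_rtranclp) (auto simp: prec_def)
lemma pq_refl[simp]: "preceq C mi pl a a" by (simp add: preceq_def)
lemma pq_trans: "preceq C mi pl a b \<Longrightarrow> preceq C mi pl b c \<Longrightarrow> preceq C mi pl a c"
  unfolding preceq_def by simp
lemma pq_step: "preceq C mi pl a b \<Longrightarrow> b \<in> C \<Longrightarrow> c \<in> C \<Longrightarrow> y \<in> pl b \<Longrightarrow> y \<in> mi c \<Longrightarrow> preceq C mi pl a c"
  using pq_trans prec_I by blast
lemma pq_C: "preceq C mi pl a b \<Longrightarrow> a \<noteq> b \<Longrightarrow> a \<in> C \<and> b \<in> C"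
  unfolding preceq_def by (induction rule: rtranclp_induct) (auto simp: prec_def)

lemma wf_char: "well_formed dim mi pl S \<longleftrightarrow>
  (\<forall>a\<in>S. \<forall>b\<in>S. a \<noteq> b \<longrightarrow> dim a = dim b \<longrightarrow> 0 < dim a \<and> mi a \<inter> mi b = {} \<and> pl a \<inter> pl b = {})"
proof
  assume H: "well_formed dim mi pl S"
  show "\<forall>a\<in>S. \<forall>b\<in>S. a \<noteq> b \<longrightarrow> dim a = dim b \<longrightarrow> 0 < dim a \<and> mi a \<inter> mi b = {} \<and> pl a \<inter> pl b = {}"
  proof (intro ballI impI)
    fix a b assume ab: "a \<in> S" "b \<in> S" "a \<noteq> b" "dim a = dim b"
    have p: "0 < dim a" using H ab unfolding well_formed_def by (metis neq0_conv)
    have "orth mi pl {a} {b}" using H ab p unfolding well_formed_def grade_def by auto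
    then show "0 < dim a \<and> mi a \<inter> mi b = {} \<and> pl a \<inter> pl b = {}" using p
      unfolding orth_def sminus_def splus_def by auto
  qed
next
  assume H: "\<forall>a\<in>S. \<forall>b\<in>S. a \<noteq> b \<longrightarrow> dim a = dim b \<longrightarrow> 0 < dim a \<and> mi a \<inter> mi b = {} \<and> pl a \<inter> pl b = {}"
  show "well_formed dim mi pl S"
    unfolding well_formed_def orth_def sminus_def splus_def grade_def
    apply (intro conjI)
    subgoal using H by force
    subgoal using H by auto
    done
qed

lemma wf_orth: "well_formed dim mi pl S \<Longrightarrow> a \<in> S \<Longrightarrow> b \<in> S \<Longrightarrow> a \<noteq> b \<Longrightarrow> dim a = dim b \<Longrightarrow>
  0 < dim a \<and> mi a \<inter> mi b = {} \<and> pl a \<inter> pl b = {}"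
  unfolding wf_char by blast

lemma wf_subset: "well_formed dim mi pl S \<Longrightarrow> T \<subseteq> S \<Longrightarrow> well_formed dim mi pl T"
  unfolding wf_char by blast


lemma Sm_grade: "S \<subseteq> C \<Longrightarrow> z \<in> sminus mi (grade dim S j) \<longleftrightarrow> z \<in> sminus mi S \<and> j = Suc (dim z)"
proof -
  assume S: "S \<subseteq> C"
  have "x \<in> S \<Longrightarrow> z \<in> mi x \<Longrightarrow> dim x = Suc (dim z)" for x using S dim_mi by blast
  then show ?thesis by auto
qed
lemma Sp_grade: "S \<subseteq> C \<Longrightarrow> z \<in> splus pl (grade dim S j) \<longleftrightarrow> z \<in> splus pl S \<and> j = Suc (dim z)"
proof -
  assume S: "S \<subseteq> C"
  have "x \<in> S \<Longrightarrow> z \<in> pl x \<Longrightarrow> dim x = Suc (dim z)" for x using S dim_pl by blast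
  then show ?thesis by auto
qed

lemma moves_lvl: assumes "S \<subseteq> C"
  shows "moves mi pl S M P \<longleftrightarrow> (\<forall>j. moves mi pl (grade dim S (Suc j)) (grade dim M j) (grade dim P j))"
proof
  assume "moves mi pl S M P"
  then have a: "\<And>z. z \<in> M \<longleftrightarrow> (z \<in> P \<or> z \<in> sminus mi S) \<and> z \<notin> splus pl S"
    and b: "\<And>z. z \<in> P \<longleftrightarrow> (z \<in> M \<or> z \<in> splus pl S) \<and> z \<notin> sminus mi S"
    unfolding moves_def by blast+
  show "\<forall>j. moves mi pl (grade dim S (Suc j)) (grade dim M j) (grade dim P j)"
    unfolding moves_def set_eq_iff Un_iff Diff_iff Sm_grade[OF assms] Sp_grade[OF assms]
    using a b by auto
next
  assume H: "\<forall>j. moves mi pl (grade dim S (Suc j)) (grade dim M j) (grade dim P j)"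
  have a: "z \<in> M \<longleftrightarrow> (z \<in> P \<or> z \<in> sminus mi S) \<and> z \<notin> splus pl S" for z
  proof -
    have "moves mi pl (grade dim S (Suc (dim z))) (grade dim M (dim z)) (grade dim P (dim z))" using H by blast
    then have "z \<in> grade dim M (dim z) \<longleftrightarrow> (z \<in> grade dim P (dim z) \<or> z \<in> sminus mi (grade dim S (Suc (dim z))))
        \<and> z \<notin> splus pl (grade dim S (Suc (dim z)))" unfolding moves_def by blast
    then show ?thesis unfolding Sm_grade[OF assms] Sp_grade[OF assms] by simp
  qed
  have b: "z \<in> P \<longleftrightarrow> (z \<in> M \<or> z \<in> splus pl S) \<and> z \<notin> sminus mi S" for z
  proof -
    have "moves mi pl (grade dim S (Suc (dim z))) (grade dim M (dim z)) (grade dim P (dim z))" using H by blast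
    then have "z \<in> grade dim P (dim z) \<longleftrightarrow> (z \<in> grade dim M (dim z) \<or> z \<in> splus pl (grade dim S (Suc (dim z))))
        \<and> z \<notin> sminus mi (grade dim S (Suc (dim z)))" unfolding moves_def by blast
    then show ?thesis unfolding Sm_grade[OF assms] Sp_grade[OF assms] by simp
  qed
  show "moves mi pl S M P" unfolding moves_def set_eq_iff Un_iff Diff_iff using a b by blast
qed

lemma wf_lvl: "well_formed dim mi pl S \<longleftrightarrow> (\<forall>j. well_formed dim mi pl (grade dim S j))"
proof
  assume "well_formed dim mi pl S" then show "\<forall>j. well_formed dim mi pl (grade dim S j)"
    by (auto intro: wf_subset)
next
  assume H: "\<forall>j. well_formed dim mi pl (grade dim S j)"
  show "well_formed dim mi pl S" unfolding wf_char
  proof (intro ballI impI)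
    fix a b assume "a \<in> S" "b \<in> S" "a \<noteq> b" "dim a = dim b"
    then show "0 < dim a \<and> mi a \<inter> mi b = {} \<and> pl a \<inter> pl b = {}"
      using wf_orth[OF H[rule_format, of "dim a"], of a b] by auto
  qed
qed

lemma cell_lvl: "cell C dim mi pl M P \<longleftrightarrow> M \<subseteq> C \<and> P \<subseteq> C \<and> M \<noteq> {} \<and> P \<noteq> {} \<and> finite M \<and> finite P \<and>
   (\<forall>j. well_formed dim mi pl (grade dim M j)) \<and> (\<forall>j. well_formed dim mi pl (grade dim P j)) \<and>
   (\<forall>j. moves mi pl (grade dim M (Suc j)) (grade dim M j) (grade dim P j) \<and>
        moves mi pl (grade dim P (Suc j)) (grade dim M j) (grade dim P j))"
proof
  assume c: "cell C dim mi pl M P"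
  then have MC: "M \<subseteq> C" and PC: "P \<subseteq> C" unfolding cell_def by auto
  show "M \<subseteq> C \<and> P \<subseteq> C \<and> M \<noteq> {} \<and> P \<noteq> {} \<and> finite M \<and> finite P \<and>
   (\<forall>j. well_formed dim mi pl (grade dim M j)) \<and> (\<forall>j. well_formed dim mi pl (grade dim P j)) \<and>
   (\<forall>j. moves mi pl (grade dim M (Suc j)) (grade dim M j) (grade dim P j) \<and>
        moves mi pl (grade dim P (Suc j)) (grade dim M j) (grade dim P j))"
    using c moves_lvl[OF MC] moves_lvl[OF PC] wf_lvl unfolding cell_def by blast
next
  assume c: "M \<subseteq> C \<and> P \<subseteq> C \<and> M \<noteq> {} \<and> P \<noteq> {} \<and> finite M \<and> finite P \<and>
   (\<forall>j. well_formed dim mi pl (grade dim M j)) \<and> (\<forall>j. well_formed dim mi pl (grade dim P j)) \<and>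
   (\<forall>j. moves mi pl (grade dim M (Suc j)) (grade dim M j) (grade dim P j) \<and>
        moves mi pl (grade dim P (Suc j)) (grade dim M j) (grade dim P j))"
  then have MC: "M \<subseteq> C" and PC: "P \<subseteq> C" by auto
  show "cell C dim mi pl M P"
    using c moves_lvl[OF MC] moves_lvl[OF PC] wf_lvl unfolding cell_def by blast
qed


lemma moves_empty[simp]: "moves mi pl {} A B \<longleftrightarrow> A = B"
  unfolding moves_def sminus_def splus_def by auto

lemma ncell_le: "n_cell C dim mi pl n M P \<Longrightarrow> z \<in> M \<union> P \<Longrightarrow> dim z \<le> n"
  unfolding n_cell_def skel_def by auto

lemma ncell_high: "n_cell C dim mi pl n M P \<Longrightarrow> n < j \<Longrightarrow> grade dim M j = {} \<and> grade dim P j = {}"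
  using ncell_le by fastforce

lemma ncell_cell: "n_cell C dim mi pl n M P \<Longrightarrow> cell C dim mi pl M P"
  unfolding n_cell_def by auto

lemma ncell_moves: "n_cell C dim mi pl n M P \<Longrightarrow>
   moves mi pl (grade dim M (Suc j)) (grade dim M j) (grade dim P j) \<and>
   moves mi pl (grade dim P (Suc j)) (grade dim M j) (grade dim P j)"
  using ncell_cell cell_lvl by blast

lemma ncell_top: "n_cell C dim mi pl n M P \<Longrightarrow> grade dim M n = grade dim P n"
  using ncell_moves[of n M P n] ncell_high[of n M P "Suc n"] by simp

lemma grade_skel_un: "(\<forall>a\<in>T. dim a = n) \<Longrightarrow>
  grade dim (skel dim M (int n - 1) \<union> T) j = (if j < n then grade dim M j else if j = n then T else {})"
  by auto

lemma maximal: assumes "finite S" "S \<noteq> {}" "S \<subseteq> C"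
  shows "\<exists>g\<in>S. \<forall>e\<in>S. pl g \<inter> mi e = {}"
proof -
  define r where "r = {(e,g). g \<in> S \<and> e \<in> S \<and> pl g \<inter> mi e \<noteq> {}}"
  have "r \<subseteq> S \<times> S" unfolding r_def by auto
  then have fr: "finite r" using assms(1) finite_subset by blast
  have star: "(u,v) \<in> r\<^sup>* \<Longrightarrow> preceq C mi pl v u" for u v
  proof (induction rule: rtrancl_induct)
    case base then show ?case by simp
  next
    case (step y z)
    then have "z \<in> C" "y \<in> C" "pl z \<inter> mi y \<noteq> {}" using assms(3) unfolding r_def by auto
    then have "preceq C mi pl z y" using prec_I by blast
    then show ?case using step pq_trans by blast
  qed
  have ac: "acyclic r" unfolding acyclic_def
  proof (intro allI notI)
    fix a assume "(a,a) \<in> r\<^sup>+"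
    then obtain b where ab: "(a,b) \<in> r" and ba: "(b,a) \<in> r\<^sup>*" by (meson tranclD)
    from ab have abC: "a \<in> C" "b \<in> C" "pl b \<inter> mi a \<noteq> {}" using assms(3) unfolding r_def by auto
    then have "preceq C mi pl b a" using prec_I by blast
    moreover have "preceq C mi pl a b" using star[OF ba] .
    ultimately have "a = b" using ax3A abC by blast
    then show False using abC mp_disj[of a] by auto
  qed
  have "wf r" using finite_acyclic_wf[OF fr ac] .
  then obtain g where g: "g \<in> S" "\<forall>y. (y,g) \<in> r \<longrightarrow> y \<notin> S"
    using assms(2) unfolding wf_eq_minimal by blast
  then show ?thesis unfolding r_def by blast
qed


lemma wf0[simp]: "well_formed dim mi pl {}" by (simp add: wf_char)

lemma lower_cell: assumes MP: "n_cell C dim mi pl (Suc k) M P" and V: "grade dim P k \<noteq> {}"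
  shows "n_cell C dim mi pl k (skel dim M (int k - 1) \<union> grade dim P k) (skel dim P (int k))"
proof -
  define M0 where "M0 = skel dim M (int k - 1) \<union> grade dim P k"
  define P0 where "P0 = skel dim P (int k)"
  have c: "cell C dim mi pl M P" using ncell_cell[OF MP] .
  have gM0: "grade dim M0 j = (if j < k then grade dim M j else if j = k then grade dim P k else {})" for j
    unfolding M0_def by (rule grade_skel_un) auto
  have gP0: "grade dim P0 j = (if j \<le> k then grade dim P j else {})" for j
    unfolding P0_def by auto
  have mv: "moves mi pl (grade dim M0 (Suc j)) (grade dim M0 j) (grade dim P0 j) \<and>
        moves mi pl (grade dim P0 (Suc j)) (grade dim M0 j) (grade dim P0 j)" for j
  proof -
    have o: "moves mi pl (grade dim M (Suc j)) (grade dim M j) (grade dim P j) \<and>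
       moves mi pl (grade dim P (Suc j)) (grade dim M j) (grade dim P j)" using ncell_moves[OF MP] .
    consider "Suc j < k" | "Suc j = k" | "j = k" | "k < j" by linarith
    then show ?thesis
    proof cases
      case 1
      then have "grade dim M0 (Suc j) = grade dim M (Suc j)" "grade dim M0 j = grade dim M j"
         "grade dim P0 (Suc j) = grade dim P (Suc j)" "grade dim P0 j = grade dim P j"
        unfolding gM0 gP0 by auto
      then show ?thesis using o by simp
    next
      case 2
      then have "grade dim M0 (Suc j) = grade dim P (Suc j)" "grade dim M0 j = grade dim M j"
         "grade dim P0 (Suc j) = grade dim P (Suc j)" "grade dim P0 j = grade dim P j"
        unfolding gM0 gP0 by auto
      then show ?thesis using o by simp
    next
      case 3
      then have "grade dim M0 (Suc j) = {}" "grade dim M0 j = grade dim P k"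
         "grade dim P0 (Suc j) = {}" "grade dim P0 j = grade dim P k"
        unfolding gM0 gP0 by auto
      then show ?thesis by simp
    next
      case 4
      then have "grade dim M0 (Suc j) = {}" "grade dim M0 j = {}"
         "grade dim P0 (Suc j) = {}" "grade dim P0 j = {}"
        unfolding gM0 gP0 by auto
      then show ?thesis by simp
    qed
  qed
  have wfM: "well_formed dim mi pl (grade dim M j)" "well_formed dim mi pl (grade dim P j)" for j
    using cell_lvl[THEN iffD1, OF c] by blast+
  have "cell C dim mi pl M0 P0"
    unfolding cell_lvl
  proof (intro conjI allI)
    have "M0 \<subseteq> M \<union> P" "P0 \<subseteq> P" unfolding M0_def P0_def by auto
    then show "M0 \<subseteq> C" "P0 \<subseteq> C" "finite M0" "finite P0" using c unfolding cell_def
      by (auto intro: finite_subset)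
    show "M0 \<noteq> {}" "P0 \<noteq> {}" using V unfolding M0_def P0_def by auto
  next
    fix j show "well_formed dim mi pl (grade dim M0 j)" "well_formed dim mi pl (grade dim P0 j)"
      by (simp_all add: gM0 gP0 wfM wf0)
  qed (use mv in blast)+
  moreover have "skel dim (M0 \<union> P0) (int k) = M0 \<union> P0" unfolding M0_def P0_def by auto
  ultimately have "n_cell C dim mi pl k M0 P0" unfolding n_cell_def by blast
  then show ?thesis by (simp add: M0_def P0_def)
qed

definition Bp :: "nat \<Rightarrow> bool" where
"Bp n \<longleftrightarrow> (\<forall>M P X. n_cell C dim mi pl n M P \<longrightarrow> X \<subseteq> grade dim C (Suc n) \<longrightarrow> well_formed dim mi pl X
   \<longrightarrow> finite X \<longrightarrow> spm mi pl X \<subseteq> grade dim M n \<longrightarrow>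
   cell C dim mi pl (skel dim M (int n - 1) \<union> ((grade dim M n \<union> sminus mi X) - splus pl X))
                    (skel dim P (int n - 1) \<union> ((grade dim M n \<union> sminus mi X) - splus pl X))
   \<and> sminus mi X \<inter> grade dim M n = {})"


lemma key:
  assumes IH: "Bp k" and MP: "n_cell C dim mi pl (Suc k) M P" and xC: "x \<in> C"
    and dx: "dim x = Suc (Suc k)" and xp: "pl x \<subseteq> grade dim M (Suc k)"
    and z1: "z \<in> sminus mi (mi x)" and z2: "z \<in> splus pl (mi x)"
    and z3: "z \<in> grade dim M k \<or> z \<in> grade dim P k \<or> z \<in> sminus mi (grade dim M (Suc k))
             \<or> z \<in> splus pl (grade dim M (Suc k))"
  shows False
proof -
  define A where "A = grade dim M (Suc k)"
  define U where "U = grade dim M k"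
  define V where "V = grade dim P k"
  have c: "cell C dim mi pl M P" using ncell_cell[OF MP] .
  have MC: "M \<subseteq> C" and finM: "finite M" and wfM: "well_formed dim mi pl M" using c unfolding cell_def by auto
  have AC: "A \<subseteq> C" unfolding A_def using MC by auto
  have finA: "finite A" unfolding A_def using finM by (auto intro: finite_subset)
  have mvA: "moves mi pl A U V" using ncell_moves[OF MP, of k] unfolding A_def U_def V_def by blast
  then have hU: "\<And>y. y \<in> U \<longleftrightarrow> (y \<in> V \<or> y \<in> sminus mi A) \<and> y \<notin> splus pl A"
    and hV: "\<And>y. y \<in> V \<longleftrightarrow> (y \<in> U \<or> y \<in> splus pl A) \<and> y \<notin> sminus mi A"
    unfolding moves_def by blast+
  obtain c0 where c0: "c0 \<in> mi x" "z \<in> pl c0" using z2 by auto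
  obtain d0 where d0: "d0 \<in> mi x" "z \<in> mi d0" using z1 by auto
  have c0C: "c0 \<in> C" "d0 \<in> C" using mi_C[OF xC] c0 d0 by auto
  have plxC: "pl x \<subseteq> C" using pl_C[OF xC] .
  have mixC: "mi x \<subseteq> C" using mi_C[OF xC] .
  define Up where "Up = {g\<in>A. \<exists>h\<in>A. (h \<in> pl x \<or> z \<in> mi h) \<and> preceq C mi pl h g}"
  have UpA: "Up \<subseteq> A" unfolding Up_def by auto
  have plxUp: "pl x \<subseteq> Up" using xp unfolding Up_def A_def by auto
  have c1: False if g: "g \<in> Up" "w \<in> pl g" "b \<in> pl x" "w \<in> mi b" "d' \<in> mi x" "w \<in> mi d'" for g w b d'
  proof -
    obtain h where h: "h \<in> A" "h \<in> pl x \<or> z \<in> mi h" "preceq C mi pl h g" using g(1) unfolding Up_def by blast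
    have C': "g \<in> C" "b \<in> C" "d' \<in> C" "h \<in> C" using g h AC UpA plxC mixC by auto
    show False using h(2)
    proof
      assume "h \<in> pl x"
      moreover have "preceq C mi pl h d'" using pq_step[OF h(3)] C' g by blast
      ultimately show False using ax3B1[of h d' x] C' xC g by blast
    next
      assume "z \<in> mi h"
      then have "preceq C mi pl c0 h" using prec_I c0 c0C C' by blast
      then have "preceq C mi pl c0 g" using h(3) pq_trans by blast
      then have "preceq C mi pl c0 b" using pq_step C' g by blast
      then show False using ax3B2[of c0 b x] C' xC g c0 c0C by blast
    qed
  qed
  have c2: False if g: "g \<in> Up" "z \<in> pl g" for g
  proof -
    obtain h where h: "h \<in> A" "h \<in> pl x \<or> z \<in> mi h" "preceq C mi pl h g" using g(1) unfolding Up_def by blast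
    have C': "g \<in> C" "h \<in> C" using g h AC UpA by auto
    show False using h(2)
    proof
      assume "h \<in> pl x"
      moreover have "preceq C mi pl h d0" using pq_step[OF h(3)] C' g c0C d0 by blast
      ultimately show False using ax3B1[of h d0 x] C' xC d0 c0C by blast
    next
      assume "z \<in> mi h"
      then have "preceq C mi pl g h" using prec_I C' g by blast
      then have "g = h" using ax3A C' h(3) by blast
      then show False using mp_disj[of g] C' g \<open>z \<in> mi h\<close> by auto
    qed
  qed
  have Up_up: "e \<in> Up" if u: "g \<in> Up" "e \<in> A" "y \<in> pl g" "y \<in> mi e" for g e y
  proof -
    obtain h where h: "h \<in> A" "h \<in> pl x \<or> z \<in> mi h" "preceq C mi pl h g" using u(1) unfolding Up_def by blast
    have "preceq C mi pl h e" using pq_step[OF h(3)] u AC UpA by blast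
    then show ?thesis using h u(2) unfolding Up_def by blast
  qed
  have spmUp: "spm mi pl Up \<subseteq> V"
  proof
    fix y assume "y \<in> spm mi pl Up"
    then obtain g where g: "g \<in> Up" "y \<in> pl g" and ny: "y \<notin> sminus mi Up" unfolding spm_def by auto
    have "y \<notin> sminus mi A"
    proof
      assume "y \<in> sminus mi A"
      then obtain e where e: "e \<in> A" "y \<in> mi e" by auto
      have "e \<in> Up" using Up_up[OF g(1) e(1) g(2) e(2)] .
      then show False using ny e by auto
    qed
    moreover have "y \<in> splus pl A" using g UpA by auto
    ultimately show "y \<in> V" using hV by blast
  qed
  have Vne: "V \<noteq> {}"
  proof -
    have "pl x \<noteq> {}" using pl_ne[OF xC] dx by simp
    then have "A \<noteq> {}" using xp A_def by auto
    then obtain g where g: "g \<in> A" "\<forall>e\<in>A. pl g \<inter> mi e = {}" using maximal[OF finA _ AC] by blast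
    have "dim g = Suc k" using g A_def by auto
    then obtain y where y: "y \<in> pl g" using pl_ne[of g] g AC by auto
    then have "y \<in> V" using hV g by auto
    then show ?thesis by auto
  qed
  define M0 where "M0 = skel dim M (int k - 1) \<union> V"
  define P0 where "P0 = skel dim P (int k)"
  have MP0: "n_cell C dim mi pl k M0 P0" using lower_cell[OF MP] Vne unfolding M0_def P0_def V_def by blast
  have gM0: "grade dim M0 k = V" unfolding M0_def V_def by auto
  have UpC: "Up \<subseteq> grade dim C (Suc k)"
  proof
    fix g assume "g \<in> Up" then have "g \<in> A" using UpA by blast
    then show "g \<in> grade dim C (Suc k)" using AC unfolding A_def by auto
  qed
  have "Up \<subseteq> M" using UpA unfolding A_def by auto
  then have wfUp: "well_formed dim mi pl Up" using wf_subset[OF wfM] by blast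
  have finUp: "finite Up" using finA UpA finite_subset by blast
  define W where "W = (V \<union> sminus mi Up) - splus pl Up"
  have spm0: "spm mi pl Up \<subseteq> grade dim M0 k" using spmUp gM0 by simp
  have W': "W = (grade dim M0 k \<union> sminus mi Up) - splus pl Up" unfolding W_def gM0 ..
  have "cell C dim mi pl (skel dim M0 (int k - 1) \<union> ((grade dim M0 k \<union> sminus mi Up) - splus pl Up))
       (skel dim P0 (int k - 1) \<union> ((grade dim M0 k \<union> sminus mi Up) - splus pl Up))"
    using IH[unfolded Bp_def, rule_format, OF MP0 UpC wfUp finUp spm0] by (rule conjunct1)
  then have "cell C dim mi pl (skel dim M0 (int k - 1) \<union> W) (skel dim P0 (int k - 1) \<union> W)"
    unfolding W' .
  then have RR: "receptive C mi pl (skel dim M0 (int k - 1) \<union> W)" using rec by blast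
  have R0: "sminus mi (pl x) \<inter> sminus mi (mi x) \<subseteq> skel dim M0 (int k - 1) \<union> W \<and>
      (skel dim M0 (int k - 1) \<union> W) \<inter> splus pl (pl x) = {} \<longrightarrow>
      (skel dim M0 (int k - 1) \<union> W) \<inter> splus pl (mi x) = {}"
    by (rule conjunct2[OF bspec[OF RR[unfolded receptive_def] xC]])
  note R = R0[rule_format, OF conjI]
  have p1: "sminus mi (pl x) \<inter> sminus mi (mi x) \<subseteq> skel dim M0 (int k - 1) \<union> W"
  proof
    fix w assume "w \<in> sminus mi (pl x) \<inter> sminus mi (mi x)"
    then obtain b d' where bd: "b \<in> pl x" "w \<in> mi b" "d' \<in> mi x" "w \<in> mi d'" by auto
    have "w \<in> sminus mi Up" using bd plxUp by auto
    moreover have "w \<notin> splus pl Up"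
    proof
      assume "w \<in> splus pl Up"
      then obtain g where "g \<in> Up" "w \<in> pl g" by auto
      then show False using c1[of g w b d'] bd by blast
    qed
    ultimately show "w \<in> skel dim M0 (int k - 1) \<union> W" unfolding W_def by auto
  qed
  have p2: "(skel dim M0 (int k - 1) \<union> W) \<inter> splus pl (pl x) = {}"
  proof (rule ccontr)
    assume "(skel dim M0 (int k - 1) \<union> W) \<inter> splus pl (pl x) \<noteq> {}"
    then obtain y where y0: "y \<in> skel dim M0 (int k - 1) \<union> W" "y \<in> splus pl (pl x)" by blast
    then obtain b where yb: "b \<in> pl x" "y \<in> pl b" by auto
    note y = y0(1) yb
    have "dim b = Suc k" using dim_pl[OF xC y(2)] dx by simp
    then have "dim y = k" using dim_pl[of b y] y plxC by auto
    moreover have "y \<notin> W" using y plxUp unfolding W_def by auto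
    ultimately show False using y by auto
  qed
  have zW: "z \<in> W"
  proof -
    have "z \<notin> splus pl Up"
    proof
      assume "z \<in> splus pl Up"
      then obtain g where "g \<in> Up" "z \<in> pl g" by auto
      then show False using c2[of g] by blast
    qed
    moreover have "z \<in> V \<or> z \<in> sminus mi Up"
    proof (cases "z \<in> sminus mi A")
      case True
      then obtain g where "g \<in> A" "z \<in> mi g" by auto
      then have "g \<in> Up" unfolding Up_def by auto
      then show ?thesis using \<open>z \<in> mi g\<close> by auto
    next
      case False
      then show ?thesis using z3 hU hV unfolding A_def U_def V_def by blast
    qed
    ultimately show ?thesis unfolding W_def by auto
  qed
  have "z \<in> (skel dim M0 (int k - 1) \<union> W) \<inter> splus pl (mi x)" using zW z2 by blast
  then show False using R[OF p1 p2] by blast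
qed


lemma step_pos:
  assumes IH: "Bp k" and MP: "n_cell C dim mi pl (Suc k) M P" and xC: "x \<in> C"
    and dx: "dim x = Suc (Suc k)" and xp: "pl x \<subseteq> grade dim M (Suc k)"
  shows "mi x \<inter> grade dim M (Suc k) = {} \<and>
     n_cell C dim mi pl (Suc k) (skel dim M (int (Suc k) - 1) \<union> ((grade dim M (Suc k) \<union> mi x) - pl x))
                                (skel dim P (int (Suc k) - 1) \<union> ((grade dim M (Suc k) \<union> mi x) - pl x))"
proof -
  define A where "A = grade dim M (Suc k)"
  define U where "U = grade dim M k"
  define V where "V = grade dim P k"
  define B where "B = A - pl x"
  define A' where "A' = (A \<union> mi x) - pl x"
  have c: "cell C dim mi pl M P" using ncell_cell[OF MP] .
  have MC: "M \<subseteq> C" and finM: "finite M" and wfM: "well_formed dim mi pl M" using c unfolding cell_def by auto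
  have AC: "A \<subseteq> C" unfolding A_def using MC by auto
  have finA: "finite A" unfolding A_def using finM by (auto intro: finite_subset)
  have dA: "\<And>a. a \<in> A \<Longrightarrow> dim a = Suc k" unfolding A_def by auto
  have mvA: "moves mi pl A U V" using ncell_moves[OF MP, of k] unfolding A_def U_def V_def by blast
  then have hU: "\<And>y. y \<in> U \<longleftrightarrow> (y \<in> V \<or> y \<in> sminus mi A) \<and> y \<notin> splus pl A"
    and hV: "\<And>y. y \<in> V \<longleftrightarrow> (y \<in> U \<or> y \<in> splus pl A) \<and> y \<notin> sminus mi A"
    unfolding moves_def by blast+
  have plxC: "pl x \<subseteq> C" using pl_C[OF xC] .
  have mixC: "mi x \<subseteq> C" using mi_C[OF xC] .
  have dmix: "\<And>a. a \<in> mi x \<Longrightarrow> dim a = Suc k" using dim_mi[OF xC] dx by force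
  have xdisj: "mi x \<inter> pl x = {}" using mp_disj[OF xC] .
  have K: False if "y \<in> sminus mi (mi x)" "y \<in> splus pl (mi x)"
     "y \<in> U \<or> y \<in> V \<or> y \<in> sminus mi A \<or> y \<in> splus pl A" for y
    using key[OF IH MP xC dx xp, of y] that unfolding U_def V_def A_def by blast
  have d1: False if t: "y \<in> sminus mi (mi x)" "y \<in> splus pl (pl x)" for y
  proof -
    obtain a b where ab: "a \<in> mi x" "y \<in> mi a" "b \<in> pl x" "y \<in> pl b" using t by auto
    have "preceq C mi pl b a" using prec_I[of b a y] ab mixC plxC by blast
    then show False using ax3B1[of b a x] ab mixC plxC xC by blast
  qed
  have d2: False if t: "y \<in> splus pl (mi x)" "y \<in> sminus mi (pl x)" for y
  proof -
    obtain a b where ab: "a \<in> mi x" "y \<in> pl a" "b \<in> pl x" "y \<in> mi b" using t by auto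
    have "preceq C mi pl a b" using prec_I[of a b y] ab mixC plxC by blast
    then show False using ax3B2[of a b x] ab mixC plxC xC by blast
  qed
  have AX: "\<And>y. y \<in> splus pl (pl x) \<or> y \<in> sminus mi (mi x) \<longleftrightarrow> y \<in> splus pl (mi x) \<or> y \<in> sminus mi (pl x)"
    using ax1[OF xC] by blast
  have wfA: "mi a \<inter> mi b = {} \<and> pl a \<inter> pl b = {}" if "a \<in> A" "b \<in> A" "a \<noteq> b" for a b
  proof -
    have "a \<in> M" "b \<in> M" "dim a = dim b" using that dA unfolding A_def by auto
    then show ?thesis using wf_orth[OF wfM _ _ that(3)] by blast
  qed
  have plxA: "pl x \<subseteq> A" using xp unfolding A_def .
  have SmA: "\<And>y. y \<in> sminus mi A \<longleftrightarrow> y \<in> sminus mi B \<or> y \<in> sminus mi (pl x)"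
    using plxA unfolding B_def by auto
  have SpA: "\<And>y. y \<in> splus pl A \<longleftrightarrow> y \<in> splus pl B \<or> y \<in> splus pl (pl x)"
    using plxA unfolding B_def by auto
  have A'eq: "A' = B \<union> mi x" unfolding A'_def B_def using xdisj by auto
  have SmA': "\<And>y. y \<in> sminus mi A' \<longleftrightarrow> y \<in> sminus mi B \<or> y \<in> sminus mi (mi x)"
    unfolding A'eq by auto
  have SpA': "\<And>y. y \<in> splus pl A' \<longleftrightarrow> y \<in> splus pl B \<or> y \<in> splus pl (mi x)"
    unfolding A'eq by auto
  have wB1: False if t: "y \<in> sminus mi B" "y \<in> sminus mi (pl x)" for y
  proof -
    obtain a b where ab: "a \<in> B" "y \<in> mi a" "b \<in> pl x" "y \<in> mi b" using t by auto
    have "a \<in> A" "b \<in> A" "a \<noteq> b" using ab plxA unfolding B_def by auto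
    then show False using wfA ab by blast
  qed
  have wB2: False if t: "y \<in> splus pl B" "y \<in> splus pl (pl x)" for y
  proof -
    obtain a b where ab: "a \<in> B" "y \<in> pl a" "b \<in> pl x" "y \<in> pl b" using t by auto
    have "a \<in> A" "b \<in> A" "a \<noteq> b" using ab plxA unfolding B_def by auto
    then show False using wfA ab by blast
  qed
  have part_a: "mi x \<inter> A = {}"
  proof (rule ccontr)
    assume "mi x \<inter> A \<noteq> {}"
    then obtain a where a: "a \<in> mi x" "a \<in> A" by blast
    have "a \<in> C" using a mixC by blast
    then obtain y where y: "y \<in> pl a" using pl_ne[of a] dmix[OF a(1)] by auto
    have y1: "y \<in> splus pl (mi x)" "y \<in> splus pl A" using a y by auto
    then have "y \<notin> sminus mi (mi x)" using K by blast
    then have "y \<in> splus pl (pl x)" using AX y1 by blast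
    then obtain b where b: "b \<in> pl x" "y \<in> pl b" by auto
    have "a \<noteq> b" using a b xdisj by blast
    then show False using wfA[OF a(2) _ \<open>a \<noteq> b\<close>] b plxA y by blast
  qed
  have hx1: False if "y \<in> sminus mi B" "y \<in> sminus mi (mi x)" for y
  proof (cases "y \<in> splus pl (mi x)")
    case True then show False using K that SmA by blast
  next
    case False then show False using AX that wB1 by blast
  qed
  have hx2: False if "y \<in> splus pl B" "y \<in> splus pl (mi x)" for y
  proof -
    have "y \<notin> sminus mi (mi x)" using K that SpA by blast
    then show False using AX that wB2 by blast
  qed
  have wfmx: "well_formed dim mi pl (mi x)" using wf_mi[OF xC] .
  have dA': "\<And>a. a \<in> A' \<Longrightarrow> dim a = Suc k" using dA dmix unfolding A'_def by blast
  have wfA': "well_formed dim mi pl A'" unfolding wf_char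
  proof (intro ballI impI)
    fix a b assume ab: "a \<in> A'" "b \<in> A'" "a \<noteq> b" "dim a = dim b"
    have "0 < dim a" using dA'[OF ab(1)] by simp
    moreover have "mi a \<inter> mi b = {} \<and> pl a \<inter> pl b = {}"
    proof -
      consider "a \<in> B" "b \<in> B" | "a \<in> mi x" "b \<in> mi x" | "a \<in> B" "b \<in> mi x" | "a \<in> mi x" "b \<in> B"
        using ab A'eq by blast
      then show ?thesis
      proof cases
        case 1 then show ?thesis using wfA ab unfolding B_def by blast
      next
        case 2 then show ?thesis using wf_orth[OF wfmx _ _ ab(3) ab(4)] by blast
      next
        case 3 then show ?thesis using hx1 hx2 unfolding Sm_iff Sp_iff by blast
      next
        case 4 then show ?thesis using hx1 hx2 unfolding Sm_iff Sp_iff by blast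
      qed
    qed
    ultimately show "0 < dim a \<and> mi a \<inter> mi b = {} \<and> pl a \<inter> pl b = {}" by blast
  qed
  have mvA': "moves mi pl A' U V" unfolding moves_def set_eq_iff Un_iff Diff_iff
  proof (intro allI conjI)
    fix y
    have f1: "y \<in> U \<longleftrightarrow> (y \<in> V \<or> y \<in> sminus mi B \<or> y \<in> sminus mi (pl x)) \<and> \<not> (y \<in> splus pl B \<or> y \<in> splus pl (pl x))"
      using hU SmA SpA by blast
    have f2: "y \<in> V \<longleftrightarrow> (y \<in> U \<or> y \<in> splus pl B \<or> y \<in> splus pl (pl x)) \<and> \<not> (y \<in> sminus mi B \<or> y \<in> sminus mi (pl x))"
      using hV SmA SpA by blast
    have f3: "\<not> (y \<in> sminus mi (mi x) \<and> y \<in> splus pl (mi x) \<and> (y \<in> U \<or> y \<in> V \<or> y \<in> sminus mi B \<or> y \<in> sminus mi (pl x) \<or> y \<in> splus pl B \<or> y \<in> splus pl (pl x)))"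
      using K SmA SpA by blast
    have f4: "\<not> (y \<in> sminus mi (mi x) \<and> y \<in> splus pl (pl x))" using d1 by blast
    have f5: "\<not> (y \<in> splus pl (mi x) \<and> y \<in> sminus mi (pl x))" using d2 by blast
    have f6: "y \<in> splus pl (pl x) \<or> y \<in> sminus mi (mi x) \<longleftrightarrow> y \<in> splus pl (mi x) \<or> y \<in> sminus mi (pl x)" using AX by blast
    have f7: "\<not> (y \<in> sminus mi B \<and> y \<in> sminus mi (pl x))" "\<not> (y \<in> splus pl B \<and> y \<in> splus pl (pl x))"
      using wB1 wB2 by blast+
    show "y \<in> U \<longleftrightarrow> (y \<in> V \<or> y \<in> sminus mi A') \<and> y \<notin> splus pl A'"
      unfolding SmA' SpA' using f1 f2 f3 f4 f5 f6 f7 by blast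
    show "y \<in> V \<longleftrightarrow> (y \<in> U \<or> y \<in> splus pl A') \<and> y \<notin> sminus mi A'"
      unfolding SmA' SpA' using f1 f2 f3 f4 f5 f6 f7 by blast
  qed
  define M1 where "M1 = skel dim M (int (Suc k) - 1) \<union> A'"
  define P1 where "P1 = skel dim P (int (Suc k) - 1) \<union> A'"
  have gM1: "grade dim M1 j = (if j < Suc k then grade dim M j else if j = Suc k then A' else {})" for j
    unfolding M1_def by (rule grade_skel_un) (use dA' in blast)
  have gP1: "grade dim P1 j = (if j < Suc k then grade dim P j else if j = Suc k then A' else {})" for j
    unfolding P1_def by (rule grade_skel_un) (use dA' in blast)
  have cl: "M \<subseteq> C \<and> P \<subseteq> C \<and> M \<noteq> {} \<and> P \<noteq> {} \<and> finite M \<and> finite P \<and>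
   (\<forall>j. well_formed dim mi pl (grade dim M j)) \<and> (\<forall>j. well_formed dim mi pl (grade dim P j)) \<and>
   (\<forall>j. moves mi pl (grade dim M (Suc j)) (grade dim M j) (grade dim P j) \<and>
        moves mi pl (grade dim P (Suc j)) (grade dim M j) (grade dim P j))"
    using cell_lvl[THEN iffD1, OF c] .
  have A'C: "A' \<subseteq> C" using AC mixC unfolding A'_def by blast
  have finA': "finite A'" using finA fin_mi[OF xC] unfolding A'_def by blast
  have A'ne: "A' \<noteq> {}" using mi_ne[OF xC] dx xdisj unfolding A'_def by auto
  have mv1: "moves mi pl (grade dim M1 (Suc j)) (grade dim M1 j) (grade dim P1 j) \<and>
        moves mi pl (grade dim P1 (Suc j)) (grade dim M1 j) (grade dim P1 j)" for j
  proof -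
    consider "j < k" | "j = k" | "k < j" by linarith
    then show ?thesis
    proof cases
      case 1
      then have "grade dim M1 (Suc j) = grade dim M (Suc j)" "grade dim M1 j = grade dim M j"
         "grade dim P1 (Suc j) = grade dim P (Suc j)" "grade dim P1 j = grade dim P j"
        unfolding gM1 gP1 by auto
      then show ?thesis using cl by simp
    next
      case 2
      then have "grade dim M1 (Suc j) = A'" "grade dim M1 j = U"
         "grade dim P1 (Suc j) = A'" "grade dim P1 j = V"
        unfolding gM1 gP1 U_def V_def by auto
      then show ?thesis using mvA' by simp
    next
      case 3
      then have "grade dim M1 (Suc j) = {}" "grade dim P1 (Suc j) = {}" "grade dim M1 j = grade dim P1 j"
        unfolding gM1 gP1 by auto
      then show ?thesis by simp
    qed
  qed
  have wf1: "well_formed dim mi pl (grade dim M1 j)" "well_formed dim mi pl (grade dim P1 j)" for j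
    unfolding gM1 gP1 using cl wfA' by auto
  have "M1 \<subseteq> M \<union> A'" "P1 \<subseteq> P \<union> A'" "A' \<subseteq> M1" "A' \<subseteq> P1" unfolding M1_def P1_def by auto
  then have "cell C dim mi pl M1 P1" unfolding cell_lvl
    using cl A'C finA' A'ne wf1 mv1 by (meson finite_Un finite_subset le_sup_iff order_trans subset_empty)
  moreover have "skel dim (M1 \<union> P1) (int (Suc k)) = M1 \<union> P1" unfolding M1_def P1_def using dA' by auto
  ultimately have "n_cell C dim mi pl (Suc k) M1 P1" unfolding n_cell_def by blast
  then show ?thesis using part_a unfolding M1_def P1_def A'_def A_def by blast
qed


lemma dim0: "a \<in> C \<Longrightarrow> dim a = 0 \<Longrightarrow> mi a = {} \<and> pl a = {}"
  using pc unfolding parity_complex_def by blast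

lemma step0:
  assumes MP: "n_cell C dim mi pl 0 M P" and xC: "x \<in> C"
    and dx: "dim x = Suc 0" and xp: "pl x \<subseteq> grade dim M 0"
  shows "mi x \<inter> grade dim M 0 = {} \<and>
     n_cell C dim mi pl 0 (skel dim M (int 0 - 1) \<union> ((grade dim M 0 \<union> mi x) - pl x))
                          (skel dim P (int 0 - 1) \<union> ((grade dim M 0 \<union> mi x) - pl x))"
proof -
  define A where "A = grade dim M 0"
  have c: "cell C dim mi pl M P" using ncell_cell[OF MP] .
  have wfM: "well_formed dim mi pl M" using c unfolding cell_def by auto
  have uniq: "a = b" if "a \<in> A" "b \<in> A" for a b
    using wfM that unfolding well_formed_def A_def by auto
  have Apl: "A = pl x"
  proof -
    obtain b where b: "b \<in> pl x" using pl_ne[OF xC] dx by auto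
    then have "b \<in> A" using xp A_def by auto
    then show ?thesis using uniq xp b unfolding A_def by blast
  qed
  have xdisj: "mi x \<inter> pl x = {}" using mp_disj[OF xC] .
  have eq: "skel dim M (int 0 - 1) \<union> ((A \<union> mi x) - pl x) = mi x"
    "skel dim P (int 0 - 1) \<union> ((A \<union> mi x) - pl x) = mi x"
    using Apl xdisj by auto
  have mixC: "mi x \<subseteq> C" using mi_C[OF xC] .
  have d0: "\<And>a. a \<in> mi x \<Longrightarrow> dim a = 0" using dim_mi[OF xC] dx by force
  have "\<forall>a\<in>mi x. mi a = {} \<and> pl a = {}" using dim0 d0 mixC by blast
  then have e: "sminus mi (mi x) = {}" "splus pl (mi x) = {}" by auto
  have "cell C dim mi pl (mi x) (mi x)" unfolding cell_def moves_def e
    using mixC mi_ne[OF xC] dx fin_mi[OF xC] wf_mi[OF xC] by auto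
  moreover have "skel dim (mi x \<union> mi x) (int 0) = mi x \<union> mi x" using d0 by auto
  ultimately have "n_cell C dim mi pl 0 (mi x) (mi x)" unfolding n_cell_def by blast
  then show ?thesis using eq Apl xdisj unfolding A_def by auto
qed

lemma Bn:
  assumes ST: "\<And>x M P. n_cell C dim mi pl n M P \<Longrightarrow> x \<in> C \<Longrightarrow> dim x = Suc n \<Longrightarrow> pl x \<subseteq> grade dim M n \<Longrightarrow>
     mi x \<inter> grade dim M n = {} \<and>
     n_cell C dim mi pl n (skel dim M (int n - 1) \<union> ((grade dim M n \<union> mi x) - pl x))
                          (skel dim P (int n - 1) \<union> ((grade dim M n \<union> mi x) - pl x))"
  shows "Bp n"
proof -
  have main: "\<forall>M P X. card X = m \<longrightarrow> finite X \<longrightarrow> n_cell C dim mi pl n M P \<longrightarrow> X \<subseteq> grade dim C (Suc n)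
    \<longrightarrow> well_formed dim mi pl X \<longrightarrow> spm mi pl X \<subseteq> grade dim M n \<longrightarrow>
   cell C dim mi pl (skel dim M (int n - 1) \<union> ((grade dim M n \<union> sminus mi X) - splus pl X))
                    (skel dim P (int n - 1) \<union> ((grade dim M n \<union> sminus mi X) - splus pl X))
   \<and> sminus mi X \<inter> grade dim M n = {}" for m
  proof (induction m)
    case 0
    show ?case
    proof (intro allI impI)
      fix M P X :: "'a set" assume a: "card X = 0" "finite X" "n_cell C dim mi pl n M P"
      then have X: "X = {}" by simp
      have "skel dim M (int n - 1) \<union> grade dim M n = M" using ncell_le[OF a(3)] by force
      moreover have "skel dim P (int n - 1) \<union> grade dim M n = P" using ncell_le[OF a(3)] ncell_top[OF a(3)] by force
      ultimately show "cell C dim mi pl (skel dim M (int n - 1) \<union> ((grade dim M n \<union> sminus mi X) - splus pl X))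
                    (skel dim P (int n - 1) \<union> ((grade dim M n \<union> sminus mi X) - splus pl X))
             \<and> sminus mi X \<inter> grade dim M n = {}"
        using X ncell_cell[OF a(3)] by (simp add: sminus_def splus_def)
    qed
  next
    case (Suc m)
    show ?case
    proof (intro allI impI)
      fix M P X :: "'a set" assume cX: "card X = Suc m" and fX: "finite X" and MP: "n_cell C dim mi pl n M P"
        and XC: "X \<subseteq> grade dim C (Suc n)" and wX: "well_formed dim mi pl X" and sX: "spm mi pl X \<subseteq> grade dim M n"
      have Xne: "X \<noteq> {}" using cX by auto
      have XC': "X \<subseteq> C" using XC by auto
      obtain x where x: "x \<in> X" and mx: "\<forall>e\<in>X. pl x \<inter> mi e = {}" using maximal[OF fX Xne XC'] by blast
      have xC: "x \<in> C" and dx: "dim x = Suc n" using x XC by auto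
      have plxS: "pl x \<inter> sminus mi X = {}"
      proof (rule ccontr)
        assume "pl x \<inter> sminus mi X \<noteq> {}"
        then obtain y where "y \<in> pl x" "y \<in> sminus mi X" by blast
        then obtain e where "e \<in> X" "y \<in> mi e" by auto
        then show False using mx \<open>y \<in> pl x\<close> by blast
      qed
      have xp: "pl x \<subseteq> grade dim M n"
      proof
        fix y assume "y \<in> pl x"
        then have "y \<in> splus pl X" "y \<notin> sminus mi X" using plxS x by (auto simp del: Sm_iff)
        then have "y \<in> spm mi pl X" unfolding spm_def by blast
        then show "y \<in> grade dim M n" using sX by blast
      qed
      define A' where "A' = (grade dim M n \<union> mi x) - pl x"
      define M1 where "M1 = skel dim M (int n - 1) \<union> A'"
      define P1 where "P1 = skel dim P (int n - 1) \<union> A'"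
      have st: "mi x \<inter> grade dim M n = {}" "n_cell C dim mi pl n M1 P1"
        using ST[OF MP xC dx xp] unfolding M1_def P1_def A'_def by blast+
      have dA': "\<forall>a\<in>A'. dim a = n" using dim_mi[OF xC] dx unfolding A'_def by force
      have gM1n: "grade dim M1 n = A'" using grade_skel_un[OF dA', of M n] unfolding M1_def by simp
      have sk1: "skel dim M1 (int n - 1) = skel dim M (int n - 1)" "skel dim P1 (int n - 1) = skel dim P (int n - 1)"
        using dA' unfolding M1_def P1_def by auto
      define X' where "X' = X - {x}"
      have cX': "card X' = m" using cX x fX unfolding X'_def by simp
      have fX': "finite X'" using fX unfolding X'_def by simp
      have XC'': "X' \<subseteq> grade dim C (Suc n)" using XC unfolding X'_def by blast
      have wX': "well_formed dim mi pl X'" using wf_subset[OF wX] unfolding X'_def by blast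
      have wfX: "pl e \<inter> pl x = {}" if "e \<in> X'" for e
      proof -
        have "e \<in> X" "e \<noteq> x" using that unfolding X'_def by auto
        moreover have "dim e = dim x" using XC x \<open>e \<in> X\<close> by (auto simp: subset_iff)
        ultimately show ?thesis using wf_orth[OF wX _ x] by blast
      qed
      have SmX: "sminus mi X = sminus mi X' \<union> mi x" using x unfolding X'_def by auto
      have SpX: "splus pl X = splus pl X' \<union> pl x" using x unfolding X'_def by auto
      have sX': "spm mi pl X' \<subseteq> grade dim M1 n"
      proof
        fix y assume y: "y \<in> spm mi pl X'"
        then obtain e where e: "e \<in> X'" "y \<in> pl e" and ny: "y \<notin> sminus mi X'" unfolding spm_def by auto
        have ny2: "y \<notin> pl x" using wfX[OF e(1)] e by blast
        show "y \<in> grade dim M1 n"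
        proof (cases "y \<in> mi x")
          case True then show ?thesis using ny2 gM1n unfolding A'_def by auto
        next
          case False
          then have "y \<in> spm mi pl X" using ny e SmX SpX unfolding spm_def by auto
          then have "y \<in> grade dim M n" using sX by blast
          then show ?thesis using ny2 gM1n unfolding A'_def by auto
        qed
      qed
      have IH: "cell C dim mi pl (skel dim M1 (int n - 1) \<union> ((grade dim M1 n \<union> sminus mi X') - splus pl X'))
                    (skel dim P1 (int n - 1) \<union> ((grade dim M1 n \<union> sminus mi X') - splus pl X'))
          \<and> sminus mi X' \<inter> grade dim M1 n = {}"
        using Suc.IH[rule_format, OF cX' fX' st(2) XC'' wX' sX'] .
      have plxS': "pl x \<inter> sminus mi X' = {}" using plxS SmX by blast
      have Yeq: "(grade dim M1 n \<union> sminus mi X') - splus pl X' = (grade dim M n \<union> sminus mi X) - splus pl X"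
        unfolding gM1n A'_def SmX SpX using plxS' by blast
      have disj: "sminus mi X \<inter> grade dim M n = {}"
      proof -
        have "sminus mi X' \<inter> A' = {}" using IH gM1n by simp
        then show ?thesis using st(1) plxS' unfolding SmX A'_def by blast
      qed
      show "cell C dim mi pl (skel dim M (int n - 1) \<union> ((grade dim M n \<union> sminus mi X) - splus pl X))
                    (skel dim P (int n - 1) \<union> ((grade dim M n \<union> sminus mi X) - splus pl X))
             \<and> sminus mi X \<inter> grade dim M n = {}"
        using IH disj unfolding Yeq sk1 by blast
    qed
  qed
  show ?thesis unfolding Bp_def using main by blast
qed

lemma allB: "Bp n"
proof (induction n)
  case 0 show ?case by (rule Bn) (rule step0)
next
  case (Suc k) show ?case by (rule Bn) (rule step_pos[OF Suc.IH])
qed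


lemma partBC:
  assumes MP: "n_cell C dim mi pl n M P"
    and XC: "X \<subseteq> grade dim C (Suc n)"
    and Xwf: "well_formed dim mi pl X"
    and fX: "finite X"
    and Xpm: "spm mi pl X \<subseteq> grade dim M n"
    and Ydef: "Y = (grade dim M n \<union> sminus mi X) - splus pl X"
  shows "(cell C dim mi pl (skel dim M (int n - 1) \<union> Y) (skel dim P (int n - 1) \<union> Y)
         \<and> sminus mi X \<inter> grade dim M n = {})
         \<and> cell C dim mi pl (skel dim M (int n - 1) \<union> Y \<union> X) (P \<union> X)"
proof -
  have BB: "cell C dim mi pl (skel dim M (int n - 1) \<union> Y) (skel dim P (int n - 1) \<union> Y)
         \<and> sminus mi X \<inter> grade dim M n = {}"
    using allB[unfolded Bp_def, rule_format, OF MP XC Xwf fX Xpm] unfolding Ydef[symmetric] .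
  define A where "A = grade dim M n"
  have AP: "grade dim P n = A" using ncell_top[OF MP] A_def by simp
  have disj: "sminus mi X \<inter> A = {}" using BB A_def by blast
  have XC': "X \<subseteq> C" using XC by auto
  have dX: "\<And>a. a \<in> X \<Longrightarrow> dim a = Suc n" using XC by auto
  have dY: "\<forall>a\<in>Y. dim a = n"
  proof
    fix a assume "a \<in> Y"
    then have "a \<in> A \<or> a \<in> sminus mi X" unfolding Ydef A_def by blast
    then show "dim a = n"
    proof
      assume "a \<in> sminus mi X"
      then obtain e where "e \<in> X" "a \<in> mi e" by auto
      then show ?thesis using dim_mi[of e a] dX XC' by force
    qed (auto simp: A_def)
  qed
  define Bm where "Bm = skel dim M (int n - 1) \<union> Y"
  define Bpp where "Bpp = skel dim P (int n - 1) \<union> Y"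
  have cB: "cell C dim mi pl Bm Bpp" using BB unfolding Bm_def Bpp_def by blast
  have clB: "Bm \<subseteq> C \<and> Bpp \<subseteq> C \<and> Bm \<noteq> {} \<and> Bpp \<noteq> {} \<and> finite Bm \<and> finite Bpp \<and>
   (\<forall>j. well_formed dim mi pl (grade dim Bm j)) \<and> (\<forall>j. well_formed dim mi pl (grade dim Bpp j)) \<and>
   (\<forall>j. moves mi pl (grade dim Bm (Suc j)) (grade dim Bm j) (grade dim Bpp j) \<and>
        moves mi pl (grade dim Bpp (Suc j)) (grade dim Bm j) (grade dim Bpp j))"
    using cell_lvl[THEN iffD1, OF cB] .
  have c: "cell C dim mi pl M P" using ncell_cell[OF MP] .
  have cl: "M \<subseteq> C \<and> P \<subseteq> C \<and> M \<noteq> {} \<and> P \<noteq> {} \<and> finite M \<and> finite P \<and>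
   (\<forall>j. well_formed dim mi pl (grade dim M j)) \<and> (\<forall>j. well_formed dim mi pl (grade dim P j)) \<and>
   (\<forall>j. moves mi pl (grade dim M (Suc j)) (grade dim M j) (grade dim P j) \<and>
        moves mi pl (grade dim P (Suc j)) (grade dim M j) (grade dim P j))"
    using cell_lvl[THEN iffD1, OF c] .
  have gBm: "grade dim Bm j = (if j < n then grade dim M j else if j = n then Y else {})" for j
    unfolding Bm_def by (rule grade_skel_un[OF dY])
  have gBp: "grade dim Bpp j = (if j < n then grade dim P j else if j = n then Y else {})" for j
    unfolding Bpp_def by (rule grade_skel_un[OF dY])
  define M2 where "M2 = skel dim M (int n - 1) \<union> Y \<union> X"
  define P2 where "P2 = P \<union> X"
  have gM2: "grade dim M2 j = (if j < n then grade dim M j else if j = n then Y else if j = Suc n then X else {})" for j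
  proof (intro set_eqI)
    fix z
    have a: "z \<in> Y \<Longrightarrow> dim z = n" "z \<in> X \<Longrightarrow> dim z = Suc n" using dY dX by auto
    show "z \<in> grade dim M2 j \<longleftrightarrow> z \<in> (if j < n then grade dim M j else if j = n then Y else if j = Suc n then X else {})"
      unfolding M2_def grade_iff skel_iff Un_iff
      by (cases "j < n"; cases "j = n"; cases "j = Suc n") (use a in auto)
  qed
  have gP2: "grade dim P2 j = (if j \<le> n then grade dim P j else if j = Suc n then X else {})" for j
  proof (intro set_eqI)
    fix z
    have a: "z \<in> P \<Longrightarrow> dim z \<le> n" "z \<in> X \<Longrightarrow> dim z = Suc n" using dX ncell_le[OF MP] by auto
    show "z \<in> grade dim P2 j \<longleftrightarrow> z \<in> (if j \<le> n then grade dim P j else if j = Suc n then X else {})"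
      unfolding P2_def grade_iff Un_iff
      by (cases "j \<le> n"; cases "j = Suc n") (use a in auto)
  qed
  have mvX: "moves mi pl X Y A"
  proof -
    have "A = (Y \<union> splus pl X) - sminus mi X"
      using disj Xpm unfolding Ydef A_def spm_def by blast
    then show ?thesis unfolding moves_def Ydef A_def by blast
  qed
  have mv2: "moves mi pl (grade dim M2 (Suc j)) (grade dim M2 j) (grade dim P2 j) \<and>
        moves mi pl (grade dim P2 (Suc j)) (grade dim M2 j) (grade dim P2 j)" for j
  proof -
    consider "Suc j < n" | "Suc j = n" | "j = n" | "j = Suc n" | "Suc n < j" by linarith
    then show ?thesis
    proof cases
      case 1
      then have "grade dim M2 (Suc j) = grade dim M (Suc j)" "grade dim M2 j = grade dim M j"
         "grade dim P2 (Suc j) = grade dim P (Suc j)" "grade dim P2 j = grade dim P j"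
        unfolding gM2 gP2 by auto
      then show ?thesis using cl by simp
    next
      case 2
      then have "grade dim M2 (Suc j) = grade dim Bm (Suc j)" "grade dim M2 j = grade dim Bm j"
         "grade dim P2 (Suc j) = grade dim P (Suc j)" "grade dim P2 j = grade dim P j"
         "grade dim Bpp j = grade dim P j" "grade dim Bm j = grade dim M j"
        unfolding gM2 gP2 gBm gBp by auto
      moreover have "moves mi pl (grade dim P (Suc j)) (grade dim M j) (grade dim P j)" using cl by blast
      moreover have "moves mi pl (grade dim Bm (Suc j)) (grade dim Bm j) (grade dim Bpp j)" using clB by blast
      ultimately show ?thesis by simp
    next
      case 3
      then have "grade dim M2 (Suc j) = X" "grade dim M2 j = Y"
         "grade dim P2 (Suc j) = X" "grade dim P2 j = A"
        unfolding gM2 gP2 using AP by auto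
      then show ?thesis using mvX by simp
    next
      case 4
      then have "grade dim M2 (Suc j) = {}" "grade dim M2 j = X"
         "grade dim P2 (Suc j) = {}" "grade dim P2 j = X"
        unfolding gM2 gP2 by auto
      then show ?thesis by simp
    next
      case 5
      then have "grade dim M2 (Suc j) = {}" "grade dim M2 j = {}"
         "grade dim P2 (Suc j) = {}" "grade dim P2 j = {}"
        unfolding gM2 gP2 by auto
      then show ?thesis by simp
    qed
  qed
  have "well_formed dim mi pl (grade dim Bm n)" using clB by blast
  then have wfY: "well_formed dim mi pl Y" using gBm[of n] by simp
  have wf2: "well_formed dim mi pl (grade dim M2 j)" "well_formed dim mi pl (grade dim P2 j)" for j
  proof -
    have "well_formed dim mi pl (grade dim M j)" "well_formed dim mi pl (grade dim P j)" using cl by blast+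
    then show "well_formed dim mi pl (grade dim M2 j)" "well_formed dim mi pl (grade dim P2 j)"
      unfolding gM2 gP2 using wfY Xwf by simp_all
  qed
  have sub: "M2 \<subseteq> Bm \<union> X" "P2 \<subseteq> P \<union> X" "P \<subseteq> P2" unfolding M2_def P2_def Bm_def by auto
  have fX': "finite X" using fX .
  have "cell C dim mi pl M2 P2" unfolding cell_lvl
  proof (intro conjI allI)
    show "M2 \<subseteq> C" "P2 \<subseteq> C" using sub clB cl XC' by blast+
    have "finite Bm" "finite P" using clB cl by blast+
    then have "finite (Bm \<union> X)" "finite (P \<union> X)" using fX by auto
    then show "finite M2" "finite P2" using sub finite_subset by blast+
    have "Bm \<noteq> {}" using clB by blast
    moreover have "Bm \<subseteq> M2" unfolding M2_def Bm_def by blast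
    ultimately show "M2 \<noteq> {}" by blast
    show "P2 \<noteq> {}" using cl sub by blast
  qed (use wf2 mv2 in blast)+
  then show ?thesis using BB unfolding M2_def P2_def by blast
qed

end

theorem lemma3p2:
  fixes C :: "'a set" and dim :: "'a \<Rightarrow> nat" and mi pl :: "'a \<Rightarrow> 'a set"
    and m n :: nat and M P X Y :: "'a set"
  assumes pc: "parity_complex C dim mi pl"
    and rec: "\<And>M' P'. cell C dim mi pl M' P' \<Longrightarrow>
                receptive C mi pl M' \<and> receptive C mi pl P'"
    and MP: "n_cell C dim mi pl n M P"
    and XC: "X \<subseteq> grade dim C (Suc n)"
    and Xwf: "well_formed dim mi pl X"
    and Xcard: "finite X" "card X = m"
    and Xpm: "spm mi pl X \<subseteq> grade dim M n"
    and Ydef: "Y = (grade dim M n \<union> sminus mi X) - splus pl X"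
  shows "(cell C dim mi pl (skel dim M (int n - 1) \<union> Y) (skel dim P (int n - 1) \<union> Y)
         \<and> sminus mi X \<inter> grade dim M n = {})
         \<and> cell C dim mi pl (skel dim M (int n - 1) \<union> Y \<union> X) (P \<union> X)"
proof -
  interpret PC C dim mi pl using pc rec by unfold_locales
  show ?thesis using partBC[OF MP XC Xwf Xcard(1) Xpm Ydef] .
qed

end
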